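(* Let $\mathcal{H}=\bigotimes_{a=1}^N\mathcal{H}_a$ be a finite-dimensional multipartite Hilbert space, let $\mathcal{N}=\{\mathcal{N}_k\}_{k=1}^M$ be a non-trivial neighborhood structure, and let $\rho\in\mathcal{D}(\mathcal{H})$. Then every state $\sigma$ in the joining set $\mathcal{M}_{\mathcal{N}}(\rho)$ satisfies $\mathrm{supp}(\sigma)\subseteq\mathcal{H}_{\mathcal{N}}(\rho)$.
   Context: $\mathcal{H}=\bigotimes_{a=1}^N\mathcal{H}_a$ with $\dim\mathcal{H}_a=d_a<\infty$; $\mathcal{D}(\mathcal{H})$ is the set of density operators (positive semidefinite, trace one) on $\mathcal{H}$. A neighborhood is a subset $\mathcal{N}_k\subsetneq\{1,\dots,N\}$ and a neighborhood structure is a finite collection $\mathcal{N}=\{\mathcal{N}_k\}_{k=1}^M$ of neighborhoods; it is non-trivial if every index $j\in\{1,\dots,N\}$ belongs to some $\mathcal{N}_k$ and every $\mathcal{N}_k$ overlaps (has nonempty intersection) with at least one other $\mathcal{N}_{k'}$. For a state $\rho$, $\overline{\mathcal{N}}_k$ denotes the complement of $\mathcal{N}_k$ and $\rho_{\mathcal{N}_k}=\mathrm{tr}_{\overline{\mathcal{N}}_k}(\rho)$ is the reduced density matrix on $\mathcal{N}_k$. The joining set is $\mathcal{M}_{\mathcal{N}}(\rho)=\{\sigma\in\mathcal{D}(\mathcal{H}):\mathrm{tr}_{\overline{\mathcal{N}}_k}\rho=\mathrm{tr}_{\overline{\mathcal{N}}_k}\sigma\ \forall\,\mathcal{N}_k\in\mathcal{N}\}$.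 The DQLS subspace of $\rho$ relative to $\mathcal{N}$ is $\mathcal{H}_{\mathcal{N}}(\rho)=\bigcap_{\mathcal{N}_k\in\mathcal{N}}\mathrm{supp}(\rho_{\mathcal{N}_k}\otimes I_{\overline{\mathcal{N}}_k})$. *)

theory Defs
  imports "HOL-Analysis.Analysis" "HOL-Library.Complex_Order"
begin

text \<open>Multipartite finite-dimensional Hilbert space H = H_0 (x) ... (x) H_(N-1),
  dim H_a = d a. Computational basis vectors are labelled by multi-indices
  i :: nat => nat with i a < d a for the subsystems a in a set S, and i a = 0
  elsewhere (a canonical padding).\<close>

type_synonym mindex = "nat \<Rightarrow> nat"
type_synonym op = "mindex \<Rightarrow> mindex \<Rightarrow> complex"
type_synonym vec = "mindex \<Rightarrow> complex"

definition idx :: "(nat \<Rightarrow> nat) \<Rightarrow> nat set \<Rightarrow> mindex set" where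
  "idx d S = {i. \<forall>a. (a \<in> S \<longrightarrow> i a < d a) \<and> (a \<notin> S \<longrightarrow> i a = 0)}"

abbreviation full :: "nat \<Rightarrow> nat set" where "full N \<equiv> {0..<N}"

definition psd_op :: "(nat \<Rightarrow> nat) \<Rightarrow> nat \<Rightarrow> op \<Rightarrow> bool" where
  "psd_op d N A \<longleftrightarrow> (\<forall>\<psi> :: vec.
     0 \<le> (\<Sum>i\<in>idx d (full N). \<Sum>j\<in>idx d (full N). cnj (\<psi> i) * A i j * \<psi> j))"

definition density :: "(nat \<Rightarrow> nat) \<Rightarrow> nat \<Rightarrow> op \<Rightarrow> bool" where
  "density d N A \<longleftrightarrow> psd_op d N A \<and> (\<Sum>i\<in>idx d (full N). A i i) = 1"

definition merge :: "nat set \<Rightarrow> mindex \<Rightarrow> mindex \<Rightarrow> mindex" where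
  "merge S i k = (\<lambda>a. if a \<in> S then i a else k a)"

definition restr :: "nat set \<Rightarrow> mindex \<Rightarrow> mindex" where
  "restr S i = (\<lambda>a. if a \<in> S then i a else 0)"

definition ptrace :: "(nat \<Rightarrow> nat) \<Rightarrow> nat \<Rightarrow> nat set \<Rightarrow> op \<Rightarrow> op" where
  "ptrace d N S \<rho> = (\<lambda>i j.
     if i \<in> idx d S \<and> j \<in> idx d S
     then (\<Sum>k\<in>idx d (full N - S). \<rho> (merge S i k) (merge S j k))
     else 0)"

text \<open>rho_S (x) I on the complement of S, as an operator on the whole space.\<close>
definition tensor_id :: "(nat \<Rightarrow> nat) \<Rightarrow> nat \<Rightarrow> nat set \<Rightarrow> op \<Rightarrow> op" where
  "tensor_id d N S X = (\<lambda>i j.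
     if i \<in> idx d (full N) \<and> j \<in> idx d (full N)
     then X (restr S i) (restr S j) *
          (if restr (full N - S) i = restr (full N - S) j then 1 else 0)
     else 0)"

definition apply_op :: "(nat \<Rightarrow> nat) \<Rightarrow> nat \<Rightarrow> op \<Rightarrow> vec \<Rightarrow> vec" where
  "apply_op d N A \<psi> = (\<lambda>i. if i \<in> idx d (full N)
      then (\<Sum>j\<in>idx d (full N). A i j * \<psi> j) else 0)"

text \<open>Support of a (Hermitian) operator = its range (span of eigenvectors with
  nonzero eigenvalue).\<close>
definition supp :: "(nat \<Rightarrow> nat) \<Rightarrow> nat \<Rightarrow> op \<Rightarrow> vec set" where
  "supp d N A = range (apply_op d N A)"

definition nontrivial_nbhd :: "nat \<Rightarrow> nat \<Rightarrow> (nat \<Rightarrow> nat set) \<Rightarrow> bool" where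
  "nontrivial_nbhd N M Nb \<longleftrightarrow>
     (\<forall>k<M. Nb k \<subset> full N) \<and>
     (\<forall>j<N. \<exists>k<M. j \<in> Nb k) \<and>
     (\<forall>k<M. \<exists>k'<M. k' \<noteq> k \<and> Nb k \<inter> Nb k' \<noteq> {})"

definition joining_set :: "(nat \<Rightarrow> nat) \<Rightarrow> nat \<Rightarrow> nat \<Rightarrow> (nat \<Rightarrow> nat set) \<Rightarrow> op \<Rightarrow> op set" where
  "joining_set d N M Nb \<rho> =
     {\<sigma>. density d N \<sigma> \<and> (\<forall>k<M. ptrace d N (Nb k) \<rho> = ptrace d N (Nb k) \<sigma>)}"

definition DQLS_subspace :: "(nat \<Rightarrow> nat) \<Rightarrow> nat \<Rightarrow> nat \<Rightarrow> (nat \<Rightarrow> nat set) \<Rightarrow> op \<Rightarrow> vec set" where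
  "DQLS_subspace d N M Nb \<rho> =
     (\<Inter>k\<in>{..<M}. supp d N (tensor_id d N (Nb k) (ptrace d N (Nb k) \<rho>)))"

end

theory Submission
  imports Defs
begin


definition ip :: "mindex set \<Rightarrow> vec \<Rightarrow> vec \<Rightarrow> complex" where
  "ip I x y = (\<Sum>i\<in>I. cnj (x i) * y i)"

definition qf :: "mindex set \<Rightarrow> op \<Rightarrow> vec \<Rightarrow> complex" where
  "qf I A v = (\<Sum>i\<in>I. \<Sum>j\<in>I. cnj (v i) * A i j * v j)"

definition herm :: "mindex set \<Rightarrow> op \<Rightarrow> bool" where
  "herm I A \<longleftrightarrow> (\<forall>i\<in>I. \<forall>j\<in>I. A i j = cnj (A j i))"

definition ap :: "mindex set \<Rightarrow> op \<Rightarrow> vec \<Rightarrow> vec" where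
  "ap I A \<psi> = (\<lambda>i. if i \<in> I then (\<Sum>j\<in>I. A i j * \<psi> j) else 0)"

inductive_set lin :: "vec set \<Rightarrow> vec set" for V where
  lin0: "(\<lambda>i. 0) \<in> lin V"
| linV: "v \<in> V \<Longrightarrow> v \<in> lin V"
| linadd: "x \<in> lin V \<Longrightarrow> y \<in> lin V \<Longrightarrow> (\<lambda>i. x i + y i) \<in> lin V"
| linsc: "x \<in> lin V \<Longrightarrow> (\<lambda>i. c * x i) \<in> lin V"

lemma lin_mono: "x \<in> lin V \<Longrightarrow> V \<subseteq> W \<Longrightarrow> x \<in> lin W"
  by (induction rule: lin.induct) (auto intro: lin.intros)

lemma ip_diff_right: "ip I v (\<lambda>i. a i - b i) = ip I v a - ip I v b"
  by (simp add: ip_def right_diff_distrib sum_subtractf)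
lemma ip_add_right: "ip I v (\<lambda>i. a i + b i) = ip I v a + ip I v b"
  by (simp add: ip_def distrib_left sum.distrib)
lemma ip_scale_right: "ip I v (\<lambda>i. c * a i) = c * ip I v a"
  by (simp add: ip_def sum_distrib_left mult.left_commute)
lemma ip_add_left: "ip I (\<lambda>i. a i + b i) r = ip I a r + ip I b r"
  by (simp add: ip_def distrib_right sum.distrib)
lemma ip_scale_left: "ip I (\<lambda>i. c * a i) r = cnj c * ip I a r"
  by (simp add: ip_def sum_distrib_left mult.assoc)
lemma ip_conj: "ip I a b = cnj (ip I b a)"
  by (simp add: ip_def mult.commute)

lemma ip_lin: "x \<in> lin V \<Longrightarrow> (\<forall>v\<in>V. ip I v r = 0) \<Longrightarrow> ip I x r = 0"
  by (induction rule: lin.induct) (auto simp: ip_add_left ip_scale_left, simp add: ip_def)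

lemma ip_self_zero:
  assumes "finite I" "ip I x x = 0" shows "\<forall>i\<in>I. x i = 0"
proof -
  have "ip I x x = (\<Sum>i\<in>I. of_real ((cmod (x i))^2))"
    unfolding ip_def by (rule sum.cong) (auto simp: complex_norm_square mult.commute simp del: of_real_power)
  then have "ip I x x = of_real (\<Sum>i\<in>I. (cmod (x i))^2)" by (simp only: of_real_sum)
  with assms have "(\<Sum>i\<in>I. (cmod (x i))^2) = 0" by (simp only: of_real_eq_0_iff)
  with assms(1) show ?thesis by (simp add: sum_nonneg_eq_0_iff)
qed

lemma ip_zero_left: "\<forall>i\<in>I. x i = 0 \<Longrightarrow> ip I x y = 0"
  by (simp add: ip_def)

lemma proj:
  assumes "finite V" "finite I"
  shows "\<exists>y\<in>lin V. \<forall>v\<in>V. ip I v (\<lambda>i. \<phi> i - y i) = 0"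
  using assms(1)
proof (induction arbitrary: \<phi> rule: finite_induct)
  case empty
  then show ?case using lin0 by blast
next
  case (insert w V)
  obtain y where y: "y \<in> lin V" "\<forall>v\<in>V. ip I v (\<lambda>i. \<phi> i - y i) = 0"
    using insert.IH by blast
  obtain y' where y': "y' \<in> lin V" "\<forall>v\<in>V. ip I v (\<lambda>i. w i - y' i) = 0"
    using insert.IH by blast
  define r where "r = (\<lambda>i. \<phi> i - y i)"
  define w' where "w' = (\<lambda>i. w i - y' i)"
  define \<alpha> where "\<alpha> = ip I w' r / ip I w' w'"
  define y'' where "y'' = (\<lambda>i. y i + \<alpha> * w' i)"
  have sub: "V \<subseteq> insert w V" by auto
  have "(\<lambda>i. (\<lambda>i. y i + \<alpha> * w i) i + (-\<alpha>) * y' i) \<in> lin (insert w V)"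
    by (intro linadd linsc lin_mono[OF y(1) sub] lin_mono[OF y'(1) sub] linV) auto
  moreover have "(\<lambda>i. (\<lambda>i. y i + \<alpha> * w i) i + (-\<alpha>) * y' i) = y''"
    unfolding y''_def w'_def by (auto simp: algebra_simps)
  ultimately have y''l: "y'' \<in> lin (insert w V)" by simp
  have r'': "(\<lambda>i. \<phi> i - y'' i) = (\<lambda>i. r i - \<alpha> * w' i)"
    unfolding y''_def r_def by (auto simp: algebra_simps)
  have V0: "\<forall>v\<in>V. ip I v (\<lambda>i. r i - \<alpha> * w' i) = 0"
    using y(2) y'(2) by (simp add: ip_diff_right ip_scale_right r_def w'_def)
  have w'0: "ip I w' (\<lambda>i. r i - \<alpha> * w' i) = 0"
  proof (cases "ip I w' w' = 0")
    case True
    then show ?thesis using ip_self_zero[OF assms(2) True] ip_zero_left by blast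
  next
    case False
    then show ?thesis unfolding ip_diff_right ip_scale_right \<alpha>_def by simp
  qed
  have "w = (\<lambda>i. w' i + y' i)" unfolding w'_def by simp
  then have "ip I w (\<lambda>i. r i - \<alpha> * w' i) = ip I w' (\<lambda>i. r i - \<alpha> * w' i) + ip I y' (\<lambda>i. r i - \<alpha> * w' i)"
    by (metis ip_add_left)
  also have "\<dots> = 0" using w'0 ip_lin[OF y'(1) V0] by simp
  finally have "\<forall>v\<in>insert w V. ip I v (\<lambda>i. \<phi> i - y'' i) = 0"
    using V0 r'' by simp
  then show ?case using y''l by blast
qed

lemma ap_add: "ap I T (\<lambda>i. a i + b i) = (\<lambda>i. ap I T a i + ap I T b i)"
  by (auto simp: ap_def distrib_left sum.distrib)
lemma ap_scale: "ap I T (\<lambda>i. c * a i) = (\<lambda>i. c * ap I T a i)"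
  by (auto simp: ap_def sum_distrib_left mult.left_commute)
lemma ap_zero: "ap I T (\<lambda>i. 0) = (\<lambda>i. 0)"
  by (auto simp: ap_def)

lemma lin_range: "x \<in> lin V \<Longrightarrow> V \<subseteq> range (ap I T) \<Longrightarrow> x \<in> range (ap I T)"
proof (induction rule: lin.induct)
  case lin0 have "ap I T (\<lambda>i. 0) \<in> range (ap I T)" by simp then show ?case by (simp add: ap_zero)
next
  case (linV v) then show ?case by blast
next
  case (linadd x y)
  then obtain a b where "x = ap I T a" "y = ap I T b" by blast
  then have "(\<lambda>i. x i + y i) = ap I T (\<lambda>i. a i + b i)" by (simp add: ap_add)
  then show ?case by simp
next
  case (linsc x c)
  then obtain a where "x = ap I T a" by blast
  then have "(\<lambda>i. c * x i) = ap I T (\<lambda>i. c * a i)" by (simp add: ap_scale)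
  then show ?case by simp
qed



lemma range_lemma:
  assumes fin: "finite I" and hT: "herm I T" and hs: "herm I \<sigma>"
    and ker: "\<And>r. (\<forall>i\<in>I. (\<Sum>j\<in>I. T i j * r j) = 0) \<Longrightarrow> (\<forall>i\<in>I. (\<Sum>j\<in>I. \<sigma> i j * r j) = 0)"
  shows "ap I \<sigma> \<psi> \<in> range (ap I T)"
proof -
  define col where "col j = ap I T (\<lambda>x. if x = j then 1 else 0)" for j
  define V where "V = col ` I"
  have colj: "col j = (\<lambda>i. if i \<in> I then T i j else 0)" if "j \<in> I" for j
  proof
    fix i
    have "(\<Sum>x\<in>I. T i x * (if x = j then 1 else 0)) = (\<Sum>x\<in>I. (if j = x then T i x else 0))"
      by (rule sum.cong) auto
    also have "\<dots> = T i j" using sum.delta'[OF fin, of j "T i"] that by simp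
    finally show "col j i = (if i \<in> I then T i j else 0)" unfolding col_def ap_def by simp
  qed
  have Vr: "V \<subseteq> range (ap I T)" unfolding V_def col_def by auto
  define \<phi> where "\<phi> = ap I \<sigma> \<psi>"
  obtain y where y: "y \<in> lin V" "\<forall>v\<in>V. ip I v (\<lambda>i. \<phi> i - y i) = 0"
    using proj[of V I \<phi>] fin unfolding V_def by blast
  define r where "r = (\<lambda>i. \<phi> i - y i)"
  have "(\<Sum>i\<in>I. T j i * r i) = 0" if j: "j \<in> I" for j
  proof -
    have "0 = ip I (col j) r" using y(2) j unfolding V_def r_def by auto
    also have "\<dots> = (\<Sum>i\<in>I. cnj (T i j) * r i)"
      unfolding ip_def colj[OF j] by (rule sum.cong) auto
    also have "\<dots> = (\<Sum>i\<in>I. T j i * r i)"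
    proof (rule sum.cong[OF refl])
      fix i assume "i \<in> I"
      then have "T j i = cnj (T i j)" using hT j unfolding herm_def by blast
      then show "cnj (T i j) * r i = T j i * r i" by simp
    qed
    finally show ?thesis by simp
  qed
  then have sr: "\<forall>i\<in>I. (\<Sum>j\<in>I. \<sigma> i j * r j) = 0" using ker by blast
  have "ip I r \<phi> = (\<Sum>i\<in>I. \<Sum>j\<in>I. cnj (r i) * (\<sigma> i j * \<psi> j))"
    unfolding ip_def \<phi>_def ap_def by (simp add: sum_distrib_left)
  also have "\<dots> = (\<Sum>j\<in>I. \<Sum>i\<in>I. cnj (r i) * (\<sigma> i j * \<psi> j))"
    by (rule sum.swap)
  also have "\<dots> = (\<Sum>j\<in>I. cnj (\<Sum>i\<in>I. \<sigma> j i * r i) * \<psi> j)"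
  proof (rule sum.cong[OF refl])
    fix j assume j: "j \<in> I"
    have "(\<Sum>i\<in>I. cnj (r i) * (\<sigma> i j * \<psi> j)) = (\<Sum>i\<in>I. cnj (\<sigma> j i * r i) * \<psi> j)"
    proof (rule sum.cong[OF refl])
      fix i assume "i \<in> I"
      then have "\<sigma> i j = cnj (\<sigma> j i)" using hs j unfolding herm_def by blast
      then show "cnj (r i) * (\<sigma> i j * \<psi> j) = cnj (\<sigma> j i * r i) * \<psi> j" by simp
    qed
    then show "(\<Sum>i\<in>I. cnj (r i) * (\<sigma> i j * \<psi> j)) = cnj (\<Sum>i\<in>I. \<sigma> j i * r i) * \<psi> j"
      by (simp add: sum_distrib_right)
  qed
  also have "\<dots> = 0" using sr by simp
  finally have r\<phi>: "ip I r \<phi> = 0" .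
  have "ip I r y = 0"
  proof -
    have "ip I y r = 0" using ip_lin[OF y(1), of I r] y(2) unfolding r_def by blast
    then show ?thesis using ip_conj[of I r y] by simp
  qed
  moreover have "ip I r r = ip I r (\<lambda>i. \<phi> i - y i)" by (simp add: r_def)
  ultimately have "ip I r r = 0" using r\<phi> by (simp add: ip_diff_right)
  then have r0: "\<forall>i\<in>I. r i = 0" using ip_self_zero fin by blast
  have yr: "y \<in> range (ap I T)" using lin_range[OF y(1) Vr] .
  have "\<phi> = y"
  proof
    fix i show "\<phi> i = y i"
    proof (cases "i \<in> I")
      case True then show ?thesis using r0 unfolding r_def by auto
    next
      case False then show ?thesis using yr unfolding \<phi>_def ap_def by auto
    qed
  qed
  then show ?thesis using yr \<phi>_def by simp
qed



lemma sum2: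
  assumes "finite I" "i \<in> I" "j \<in> I" "i \<noteq> j"
  shows "(\<Sum>y\<in>I. f y * ((if y = i then a else 0) + (if y = j then b else 0))) = f i * a + f j * (b::complex)"
proof -
  have "(\<Sum>y\<in>I. f y * ((if y = i then a else 0) + (if y = j then b else 0)))
     = (\<Sum>y\<in>I. (if y = i then f y * a else 0)) + (\<Sum>y\<in>I. (if y = j then f y * b else 0))"
    by (simp add: distrib_left sum.distrib if_distrib[of "\<lambda>z. f _ * z"] cong: if_cong)
  also have "\<dots> = f i * a + f j * b" using assms by (simp add: sum.delta)
  finally show ?thesis .
qed

lemma qf2:
  assumes "finite I" "i \<in> I" "j \<in> I" "i \<noteq> j"
  shows "qf I A (\<lambda>x. (if x = i then a else 0) + (if x = j then b else 0))
     = cnj a * A i i * a + cnj a * A i j * b + cnj b * A j i * a + cnj b * A j j * b"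
proof -
  have "qf I A (\<lambda>x. (if x = i then a else 0) + (if x = j then b else 0))
    = (\<Sum>x\<in>I. cnj ((if x = i then a else 0) + (if x = j then b else 0)) * (A x i * a + A x j * b))"
    unfolding qf_def
  proof (rule sum.cong[OF refl])
    fix x
    have "(\<Sum>y\<in>I. cnj ((if x = i then a else 0) + (if x = j then b else 0)) * A x y * ((if y = i then a else 0) + (if y = j then b else 0)))
      = cnj ((if x = i then a else 0) + (if x = j then b else 0)) * (\<Sum>y\<in>I. A x y * ((if y = i then a else 0) + (if y = j then b else 0)))"
      by (simp add: sum_distrib_left mult.assoc)
    then show "(\<Sum>y\<in>I. cnj ((if x = i then a else 0) + (if x = j then b else 0)) * A x y * ((if y = i then a else 0) + (if y = j then b else 0)))
      = cnj ((if x = i then a else 0) + (if x = j then b else 0)) * (A x i * a + A x j * b)"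
      using sum2[OF assms, of "A x" a b] by simp
  qed
  also have "\<dots> = (\<Sum>x\<in>I. (A x i * a + A x j * b) * ((if x = i then cnj a else 0) + (if x = j then cnj b else 0)))"
    by (rule sum.cong) (auto simp: mult.commute)
  also have "\<dots> = (A i i * a + A i j * b) * cnj a + (A j i * a + A j j * b) * cnj b"
    using sum2[OF assms] by simp
  finally show ?thesis by (simp add: algebra_simps)
qed

lemma qf1:
  assumes "finite I" "i \<in> I"
  shows "qf I A (\<lambda>x. if x = i then 1 else 0) = A i i"
proof -
  have "qf I A (\<lambda>x. if x = i then 1 else 0) = (\<Sum>x\<in>I. cnj (if x = i then 1 else 0) * A x i)"
    unfolding qf_def using assms
    by (intro sum.cong refl) (simp add: if_distrib[of "\<lambda>z. _ * z"] sum.delta cong: if_cong)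
  also have "\<dots> = (\<Sum>x\<in>I. (if x = i then A x i else 0))" by (rule sum.cong) auto
  also have "\<dots> = A i i" using assms by (simp add: sum.delta)
  finally show ?thesis .
qed

lemma psd_herm:
  assumes fin: "finite I" and psd: "\<And>\<psi>. 0 \<le> qf I A \<psi>"
  shows "herm I A"
  unfolding herm_def
proof (intro ballI)
  fix i j assume ij: "i \<in> I" "j \<in> I"
  show "A i j = cnj (A j i)"
  proof (cases "i = j")
    case True
    have "0 \<le> A i i" using psd[of "\<lambda>x. if x = i then 1 else 0"] qf1[OF fin ij(1)] by simp
    then show ?thesis using True by (simp add: less_eq_complex_def complex_eq_iff)
  next
    case False
    have 1: "0 \<le> qf I A (\<lambda>x. (if x = i then 1 else 0) + (if x = j then 1 else 0))" by (rule psd)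
    have 2: "0 \<le> qf I A (\<lambda>x. (if x = i then 1 else 0) + (if x = j then \<i> else 0))" by (rule psd)
    have "0 \<le> A i i" using psd[of "\<lambda>x. if x = i then 1 else 0"] qf1[OF fin ij(1)] by simp
    moreover have "0 \<le> A j j" using psd[of "\<lambda>x. if x = j then 1 else 0"] qf1[OF fin ij(2)] by simp
    ultimately show ?thesis using 1 2 unfolding qf2[OF fin ij False]
      by (simp add: less_eq_complex_def complex_eq_iff algebra_simps)
  qed
qed



definition bf :: "mindex set \<Rightarrow> op \<Rightarrow> vec \<Rightarrow> vec \<Rightarrow> complex" where
  "bf I A x y = (\<Sum>i\<in>I. \<Sum>j\<in>I. cnj (x i) * A i j * y j)"

lemma qf_expand:
  "qf I A (\<lambda>i. v i + t * w i) = qf I A v + t * bf I A v w + cnj t * bf I A w v + cnj t * t * qf I A w"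
  unfolding qf_def bf_def
  by (simp add: algebra_simps sum.distrib sum_distrib_left)

lemma bf_herm:
  assumes "herm I A" shows "bf I A v w = cnj (bf I A w v)"
proof -
  have "cnj (bf I A w v) = (\<Sum>i\<in>I. \<Sum>j\<in>I. cnj (v j) * A j i * w i)"
    unfolding bf_def
  proof (simp, intro sum.cong refl)
    fix i j assume "i \<in> I" "j \<in> I"
    then have "A j i = cnj (A i j)" using assms unfolding herm_def by blast
    then show "w i * cnj (A i j) * cnj (v j) = cnj (v j) * A j i * w i" by simp
  qed
  also have "\<dots> = bf I A v w" unfolding bf_def by (rule sum.swap)
  finally show ?thesis by simp
qed

lemma psd_kernel:
  assumes fin: "finite I" and h: "herm I A" and psd: "\<And>\<psi>. 0 \<le> qf I A \<psi>"
    and v0: "qf I A v = 0"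
  shows "\<forall>i\<in>I. (\<Sum>j\<in>I. A i j * v j) = 0"
proof -
  define w where "w = (\<lambda>i. \<Sum>j\<in>I. A i j * v j)"
  define s where "s = (\<Sum>i\<in>I. (cmod (w i))^2)"
  have bwv: "bf I A w v = ip I w w"
    unfolding bf_def ip_def w_def by (simp add: sum_distrib_left mult.assoc)
  have "ip I w w = (\<Sum>i\<in>I. of_real ((cmod (w i))^2))"
    unfolding ip_def by (rule sum.cong) (auto simp: complex_norm_square mult.commute simp del: of_real_power)
  then have ipw: "ip I w w = of_real s" unfolding s_def by (simp only: of_real_sum)
  have bvw: "bf I A v w = of_real s" using bf_herm[OF h, of v w] bwv ipw by simp
  have s0: "s \<ge> 0" unfolding s_def by (simp add: sum_nonneg)
  define q where "q = Re (qf I A w)"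
  have q0: "q \<ge> 0" using psd[of w] unfolding q_def by (simp add: less_eq_complex_def)
  have qw: "qf I A w = of_real q" using psd[of w] unfolding q_def by (simp add: less_eq_complex_def complex_eq_iff)
  have key: "0 \<le> -2 * e * s + e^2 * q" for e :: real
  proof -
    have "0 \<le> Re (qf I A (\<lambda>i. v i + of_real (-e) * w i))" using psd by (simp add: less_eq_complex_def)
    also have "\<dots> = -2 * e * s + e^2 * q"
      unfolding qf_expand v0 bvw bwv ipw qw by (simp add: power2_eq_square)
    finally show ?thesis .
  qed
  have "s = 0"
  proof (rule ccontr)
    assume "s \<noteq> 0"
    with s0 have sp: "s > 0" by simp
    define e where "e = s / (q + 1)"
    have se: "s = e * (q + 1)" unfolding e_def using q0 by simp
    have ep: "e > 0" unfolding e_def using sp q0 by simp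
    have "-2 * e * s + e^2 * q = e^2 * (- q - 2)"
      unfolding se by (simp add: algebra_simps power2_eq_square)
    also have "\<dots> < 0" using ep q0 by (intro mult_pos_neg) auto
    finally show False using key[of e] by simp
  qed
  then have "\<forall>i\<in>I. (cmod (w i))^2 = 0" using fin unfolding s_def by (simp add: sum_nonneg_eq_0_iff)
  then show ?thesis unfolding w_def by simp
qed



lemma finite_idx: assumes "finite S" shows "finite (idx d S)"
proof -
  have "idx d S \<subseteq> restr S ` PiE S (\<lambda>a. {..<d a})"
  proof
    fix i assume i: "i \<in> idx d S"
    have "restrict i S \<in> PiE S (\<lambda>a. {..<d a})" using i by (auto simp: idx_def)
    moreover have "restr S (restrict i S) = i" using i by (auto simp: idx_def restr_def)
    ultimately show "i \<in> restr S ` PiE S (\<lambda>a. {..<d a})" by (metis image_eqI)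
  qed
  moreover have "finite (PiE S (\<lambda>a. {..<d a}))" using assms by (simp add: finite_PiE)
  ultimately show ?thesis by (meson finite_imageI finite_subset)
qed

lemma merge_in: "S \<subseteq> F \<Longrightarrow> i \<in> idx d S \<Longrightarrow> k \<in> idx d (F - S) \<Longrightarrow> merge S i k \<in> idx d F"
  by (auto simp: idx_def merge_def)
lemma restr_merge1: "i \<in> idx d S \<Longrightarrow> restr S (merge S i k) = i"
  by (auto simp: idx_def merge_def restr_def)
lemma restr_merge2: "k \<in> idx d (F - S) \<Longrightarrow> restr (F - S) (merge S i k) = k"
  by (auto simp: idx_def merge_def restr_def)
lemma merge_restr: "S \<subseteq> F \<Longrightarrow> y \<in> idx d F \<Longrightarrow> merge S (restr S y) (restr (F - S) y) = y"
  by (auto simp: idx_def merge_def restr_def)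
lemma restr_in1: "S \<subseteq> F \<Longrightarrow> y \<in> idx d F \<Longrightarrow> restr S y \<in> idx d S"
  by (auto simp: idx_def restr_def)
lemma restr_in2: "y \<in> idx d F \<Longrightarrow> restr (F - S) y \<in> idx d (F - S)"
  by (auto simp: idx_def restr_def)

lemma sum_split:
  assumes "S \<subseteq> F"
  shows "(\<Sum>y\<in>idx d F. f y) = (\<Sum>i\<in>idx d S. \<Sum>k\<in>idx d (F - S). f (merge S i k))"
proof -
  have "(\<Sum>i\<in>idx d S. \<Sum>k\<in>idx d (F - S). f (merge S i k))
      = (\<Sum>p\<in>idx d S \<times> idx d (F - S). f (merge S (fst p) (snd p)))"
    by (simp add: sum.cartesian_product split_def)
  also have "\<dots> = (\<Sum>y\<in>idx d F. f y)"
    by (rule sum.reindex_bij_witness[of _ "\<lambda>y. (restr S y, restr (F - S) y)" "\<lambda>p. merge S (fst p) (snd p)"])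
       (auto simp: assms merge_in restr_in1[OF assms] restr_merge1 restr_merge2 merge_restr restr_in1 restr_in2)
  finally show ?thesis by simp
qed




lemma fin_idxN: "finite (idx d {0..<N})" by (rule finite_idx) simp
lemma fin_idxC: "finite (idx d ({0..<N} - S))" by (rule finite_idx) simp
lemma fin_idxS: "S \<subseteq> {0..<N} \<Longrightarrow> finite (idx d S)" by (rule finite_idx) (auto intro: finite_subset)

lemma stepA:
  assumes S: "S \<subseteq> {0..<N}" and i: "i \<in> idx d S" and k: "k \<in> idx d ({0..<N} - S)"
    and hr: "\<forall>x\<in>idx d {0..<N}. (\<Sum>y\<in>idx d {0..<N}. tensor_id d N S X x y * r y) = 0"
  shows "(\<Sum>j\<in>idx d S. X i j * r (merge S j k)) = 0"
proof -
  have x: "merge S i k \<in> idx d {0..<N}" using merge_in[OF S i k] .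
  have "0 = (\<Sum>y\<in>idx d {0..<N}. tensor_id d N S X (merge S i k) y * r y)" using hr x by simp
  also have "\<dots> = (\<Sum>j\<in>idx d S. \<Sum>k'\<in>idx d ({0..<N} - S).
      tensor_id d N S X (merge S i k) (merge S j k') * r (merge S j k'))"
    by (rule sum_split[OF S])
  also have "\<dots> = (\<Sum>j\<in>idx d S. X i j * r (merge S j k))"
  proof (rule sum.cong[OF refl])
    fix j assume j: "j \<in> idx d S"
    have "(\<Sum>k'\<in>idx d ({0..<N} - S). tensor_id d N S X (merge S i k) (merge S j k') * r (merge S j k'))
       = (\<Sum>k'\<in>idx d ({0..<N} - S). (if k = k' then X i j * r (merge S j k') else 0))"
    proof (rule sum.cong[OF refl])
      fix k' assume k': "k' \<in> idx d ({0..<N} - S)"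
      show "tensor_id d N S X (merge S i k) (merge S j k') * r (merge S j k')
          = (if k = k' then X i j * r (merge S j k') else 0)"
        unfolding tensor_id_def
        using x merge_in[OF S j k'] restr_merge1[OF i] restr_merge1[OF j]
          restr_merge2[where i=i, OF k] restr_merge2[where i=j, OF k'] by simp
    qed
    also have "\<dots> = X i j * r (merge S j k)" using k fin_idxC by (simp add: sum.delta')
    finally show "(\<Sum>k'\<in>idx d ({0..<N} - S). tensor_id d N S X (merge S i k) (merge S j k') * r (merge S j k'))
       = X i j * r (merge S j k)" .
  qed
  finally show ?thesis by simp
qed

lemma slice_sum:
  fixes g h :: "mindex \<Rightarrow> complex"
  assumes S: "S \<subseteq> {0..<N}" and k': "k' \<in> idx d ({0..<N} - S)"
  shows "(\<Sum>y\<in>idx d {0..<N}. g y * (if y \<in> idx d {0..<N} \<and> restr ({0..<N} - S) y = k' then h (restr S y) else 0))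
       = (\<Sum>j\<in>idx d S. g (merge S j k') * h j)"
proof -
  have "(\<Sum>y\<in>idx d {0..<N}. g y * (if y \<in> idx d {0..<N} \<and> restr ({0..<N} - S) y = k' then h (restr S y) else 0))
    = (\<Sum>j\<in>idx d S. \<Sum>k1\<in>idx d ({0..<N} - S). g (merge S j k1) * (if merge S j k1 \<in> idx d {0..<N} \<and> restr ({0..<N} - S) (merge S j k1) = k' then h (restr S (merge S j k1)) else 0))"
    by (rule sum_split[OF S])
  also have "\<dots> = (\<Sum>j\<in>idx d S. g (merge S j k') * h j)"
  proof (rule sum.cong[OF refl])
    fix j assume j: "j \<in> idx d S"
    have "(\<Sum>k1\<in>idx d ({0..<N} - S). g (merge S j k1) * (if merge S j k1 \<in> idx d {0..<N} \<and> restr ({0..<N} - S) (merge S j k1) = k' then h (restr S (merge S j k1)) else 0))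
      = (\<Sum>k1\<in>idx d ({0..<N} - S). (if k' = k1 then g (merge S j k1) * h j else 0))"
    proof (rule sum.cong[OF refl])
      fix k1 assume k1: "k1 \<in> idx d ({0..<N} - S)"
      show "g (merge S j k1) * (if merge S j k1 \<in> idx d {0..<N} \<and> restr ({0..<N} - S) (merge S j k1) = k' then h (restr S (merge S j k1)) else 0)
        = (if k' = k1 then g (merge S j k1) * h j else 0)"
        using merge_in[OF S j k1] restr_merge1[OF j] restr_merge2[where i=j, OF k1] by auto
    qed
    also have "\<dots> = g (merge S j k') * h j" using k' fin_idxC by (simp add: sum.delta')
    finally show "(\<Sum>k1\<in>idx d ({0..<N} - S). g (merge S j k1) * (if merge S j k1 \<in> idx d {0..<N} \<and> restr ({0..<N} - S) (merge S j k1) = k' then h (restr S (merge S j k1)) else 0))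
      = g (merge S j k') * h j" .
  qed
  finally show ?thesis .
qed




lemma tensor_kernel:
  assumes S: "S \<subseteq> {0..<N}" and psd: "\<And>\<psi>. 0 \<le> qf (idx d {0..<N}) \<sigma> \<psi>"
    and h: "herm (idx d {0..<N}) \<sigma>"
    and hr: "\<forall>x\<in>idx d {0..<N}. (\<Sum>y\<in>idx d {0..<N}. tensor_id d N S (ptrace d N S \<sigma>) x y * r y) = 0"
  shows "\<forall>x\<in>idx d {0..<N}. (\<Sum>y\<in>idx d {0..<N}. \<sigma> x y * r y) = 0"
proof -
  let ?I = "idx d {0..<N}" and ?IS = "idx d S" and ?IC = "idx d ({0..<N} - S)"
  have A: "(\<Sum>j\<in>?IS. ptrace d N S \<sigma> i j * r (merge S j k)) = 0" if "i \<in> ?IS" "k \<in> ?IC" for i k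
    using stepA[OF S that hr] .
  have B: "(\<Sum>j\<in>?IS. \<sigma> x (merge S j k) * r (merge S j k)) = 0" if k: "k \<in> ?IC" and x: "x \<in> ?I" for k x
  proof -
    define hh where "hh j = r (merge S j k)" for j
    define w where "w k' = (\<lambda>y. if y \<in> ?I \<and> restr ({0..<N} - S) y = k' then hh (restr S y) else 0)" for k'
    have qfw: "qf ?I \<sigma> (w k') = (\<Sum>i\<in>?IS. \<Sum>j\<in>?IS. cnj (hh i) * \<sigma> (merge S i k') (merge S j k') * hh j)"
      if k': "k' \<in> ?IC" for k'
    proof -
      have "qf ?I \<sigma> (w k') = (\<Sum>x\<in>?I. cnj (w k' x) * (\<Sum>y\<in>?I. \<sigma> x y * w k' y))"
        unfolding qf_def by (simp add: sum_distrib_left mult.assoc)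
      also have "\<dots> = (\<Sum>x\<in>?I. (\<Sum>j\<in>?IS. \<sigma> x (merge S j k') * hh j) *
          (if x \<in> ?I \<and> restr ({0..<N} - S) x = k' then (cnj \<circ> hh) (restr S x) else 0))"
      proof (rule sum.cong[OF refl])
        fix x
        have "(\<Sum>y\<in>?I. \<sigma> x y * w k' y) = (\<Sum>j\<in>?IS. \<sigma> x (merge S j k') * hh j)"
          unfolding w_def by (rule slice_sum[OF S k'])
        then show "cnj (w k' x) * (\<Sum>y\<in>?I. \<sigma> x y * w k' y) = (\<Sum>j\<in>?IS. \<sigma> x (merge S j k') * hh j) *
          (if x \<in> ?I \<and> restr ({0..<N} - S) x = k' then (cnj \<circ> hh) (restr S x) else 0)"
          unfolding w_def by (simp add: mult.commute)
      qed
      also have "\<dots> = (\<Sum>i\<in>?IS. (\<Sum>j\<in>?IS. \<sigma> (merge S i k') (merge S j k') * hh j) * (cnj \<circ> hh) i)"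
        by (rule slice_sum[OF S k'])
      also have "\<dots> = (\<Sum>i\<in>?IS. \<Sum>j\<in>?IS. cnj (hh i) * \<sigma> (merge S i k') (merge S j k') * hh j)"
        by (simp add: sum_distrib_right sum_distrib_left mult.commute mult.left_commute mult.assoc)
      finally show ?thesis .
    qed
    have "(\<Sum>k'\<in>?IC. qf ?I \<sigma> (w k')) = (\<Sum>k'\<in>?IC. \<Sum>i\<in>?IS. \<Sum>j\<in>?IS. cnj (hh i) * \<sigma> (merge S i k') (merge S j k') * hh j)"
      using qfw by simp
    also have "\<dots> = (\<Sum>i\<in>?IS. \<Sum>k'\<in>?IC. \<Sum>j\<in>?IS. cnj (hh i) * \<sigma> (merge S i k') (merge S j k') * hh j)"
      by (rule sum.swap)
    also have "\<dots> = (\<Sum>i\<in>?IS. \<Sum>j\<in>?IS. \<Sum>k'\<in>?IC. cnj (hh i) * \<sigma> (merge S i k') (merge S j k') * hh j)"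
      by (rule sum.cong[OF refl], rule sum.swap)
    also have "\<dots> = (\<Sum>i\<in>?IS. cnj (hh i) * (\<Sum>j\<in>?IS. ptrace d N S \<sigma> i j * hh j))"
    proof (rule sum.cong[OF refl])
      fix i assume i: "i \<in> ?IS"
      have "(\<Sum>j\<in>?IS. \<Sum>k'\<in>?IC. cnj (hh i) * \<sigma> (merge S i k') (merge S j k') * hh j)
          = (\<Sum>j\<in>?IS. cnj (hh i) * (ptrace d N S \<sigma> i j * hh j))"
      proof (rule sum.cong[OF refl])
        fix j assume j: "j \<in> ?IS"
        show "(\<Sum>k'\<in>?IC. cnj (hh i) * \<sigma> (merge S i k') (merge S j k') * hh j)
          = cnj (hh i) * (ptrace d N S \<sigma> i j * hh j)"
          unfolding ptrace_def using i j by (simp add: sum_distrib_left sum_distrib_right mult.assoc)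
      qed
      then show "(\<Sum>j\<in>?IS. \<Sum>k'\<in>?IC. cnj (hh i) * \<sigma> (merge S i k') (merge S j k') * hh j)
          = cnj (hh i) * (\<Sum>j\<in>?IS. ptrace d N S \<sigma> i j * hh j)"
        by (simp add: sum_distrib_left)
    qed
    also have "\<dots> = 0" using A k unfolding hh_def by simp
    finally have "(\<Sum>k'\<in>?IC. qf ?I \<sigma> (w k')) = 0" .
    then have "\<forall>k'\<in>?IC. qf ?I \<sigma> (w k') = 0"
      using fin_idxC psd by (simp add: sum_nonneg_eq_0_iff)
    then have "qf ?I \<sigma> (w k) = 0" using k by blast
    from psd_kernel[OF fin_idxN h psd this] x
    have "(\<Sum>y\<in>?I. \<sigma> x y * w k y) = 0" by blast
    then show ?thesis using slice_sum[OF S k, of "\<sigma> x" hh] unfolding w_def hh_def by simp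
  qed
  show ?thesis
  proof
    fix x assume x: "x \<in> ?I"
    have "(\<Sum>y\<in>?I. \<sigma> x y * r y) = (\<Sum>j\<in>?IS. \<Sum>k\<in>?IC. \<sigma> x (merge S j k) * r (merge S j k))"
      by (rule sum_split[OF S])
    also have "\<dots> = (\<Sum>k\<in>?IC. \<Sum>j\<in>?IS. \<sigma> x (merge S j k) * r (merge S j k))"
      by (rule sum.swap)
    also have "\<dots> = 0" using B x by simp
    finally show "(\<Sum>y\<in>?I. \<sigma> x y * r y) = 0" .
  qed
qed




lemma ptrace_herm:
  assumes S: "S \<subseteq> {0..<N}" and h: "herm (idx d {0..<N}) \<sigma>"
    and i: "i \<in> idx d S" and j: "j \<in> idx d S"
  shows "ptrace d N S \<sigma> i j = cnj (ptrace d N S \<sigma> j i)"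
proof -
  have "ptrace d N S \<sigma> i j = (\<Sum>k\<in>idx d ({0..<N} - S). \<sigma> (merge S i k) (merge S j k))"
    using i j by (simp add: ptrace_def)
  also have "\<dots> = (\<Sum>k\<in>idx d ({0..<N} - S). cnj (\<sigma> (merge S j k) (merge S i k)))"
  proof (rule sum.cong[OF refl])
    fix k assume k: "k \<in> idx d ({0..<N} - S)"
    show "\<sigma> (merge S i k) (merge S j k) = cnj (\<sigma> (merge S j k) (merge S i k))"
      using h merge_in[OF S i k] merge_in[OF S j k] unfolding herm_def by blast
  qed
  also have "\<dots> = cnj (ptrace d N S \<sigma> j i)" using i j by (simp add: ptrace_def)
  finally show ?thesis .
qed

lemma tensor_herm:
  assumes S: "S \<subseteq> {0..<N}" and h: "herm (idx d {0..<N}) \<sigma>"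
  shows "herm (idx d {0..<N}) (tensor_id d N S (ptrace d N S \<sigma>))"
  unfolding herm_def
proof (intro ballI)
  fix x y assume x: "x \<in> idx d {0..<N}" and y: "y \<in> idx d {0..<N}"
  have "ptrace d N S \<sigma> (restr S x) (restr S y) = cnj (ptrace d N S \<sigma> (restr S y) (restr S x))"
    using ptrace_herm[OF S h restr_in1[OF S x] restr_in1[OF S y]] .
  then show "tensor_id d N S (ptrace d N S \<sigma>) x y = cnj (tensor_id d N S (ptrace d N S \<sigma>) y x)"
    using x y unfolding tensor_id_def by auto
qed

lemma apply_op_ap: "apply_op d N = ap (idx d {0..<N})"
  by (auto simp: apply_op_def ap_def fun_eq_iff)

theorem mainTheorem1:
  fixes d :: "nat \<Rightarrow> nat" and N M :: nat and Nb :: "nat \<Rightarrow> nat set"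
    and \<rho> \<sigma> :: op
  assumes "\<forall>a<N. 0 < d a"
    and "nontrivial_nbhd N M Nb"
    and "density d N \<rho>"
    and "\<sigma> \<in> joining_set d N M Nb \<rho>"
  shows "supp d N \<sigma> \<subseteq> DQLS_subspace d N M Nb \<rho>"
proof
  let ?I = "idx d {0..<N}"
  have dens: "density d N \<sigma>" and pt: "\<And>k. k < M \<Longrightarrow> ptrace d N (Nb k) \<rho> = ptrace d N (Nb k) \<sigma>"
    using assms(4) unfolding joining_set_def by auto
  have psd: "\<And>\<psi>. 0 \<le> qf ?I \<sigma> \<psi>" using dens unfolding density_def psd_op_def qf_def by blast
  have hs: "herm ?I \<sigma>" by (rule psd_herm[OF fin_idxN psd])
  fix v assume "v \<in> supp d N \<sigma>"
  then obtain \<psi> where v: "v = ap ?I \<sigma> \<psi>" unfolding supp_def apply_op_ap by blast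
  show "v \<in> DQLS_subspace d N M Nb \<rho>"
    unfolding DQLS_subspace_def supp_def apply_op_ap
  proof
    fix k assume "k \<in> {..<M}"
    then have k: "k < M" by simp
    have S: "Nb k \<subseteq> {0..<N}" using assms(2) k unfolding nontrivial_nbhd_def by blast
    have "v \<in> range (ap ?I (tensor_id d N (Nb k) (ptrace d N (Nb k) \<sigma>)))"
      unfolding v
      by (rule range_lemma[OF fin_idxN tensor_herm[OF S hs] hs])
         (rule tensor_kernel[OF S psd hs], simp)
    then show "v \<in> range (ap ?I (tensor_id d N (Nb k) (ptrace d N (Nb k) \<rho>)))"
      using pt[OF k] by simp
  qed
qed


end
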